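(* Let $m\le n$ and let $g:\mathbb{R}^n\to\mathbb{R}^m$ have components $g_i(x)=\frac12(A_ix,x)+(b_i,x)$, $i=1,\dots,m$, with symmetric $A_i\in\mathbb{R}^{n\times n}$ and $b_i\in\mathbb{R}^n$. Let $H\in\mathbb{R}^{m\times n}$ be the matrix with rows $b_i^T$, assume $H$ has rank $m$, and let $\mu_0>0$ be its smallest singular value. Let $L>0$ satisfy $\|g'(x)-g'(x')\|_2\le L\|x-x'\|_2$ for all $x,x'\in\mathbb{R}^n$. Then for every $y\in\mathbb{R}^m$ with $\|y\|_2<\frac{\mu_0^2}{4L}$ the equation $g(x)=y$ has a solution $x^*(y)$ with $\|x^*(y)\|_2\le\frac{\mu_0}{2L}$.
   Context: All norms are Euclidean; for matrices $\|\cdot\|_2$ is the spectral (operator) norm. $g'(x)$ is the $m\times n$ Jacobian with rows $(A_ix+b_i)^T$. *)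

theory Defs
  imports "HOL-Analysis.Analysis"
begin

text \<open>Smallest singular value of an m x n matrix H with m \<le> n: the square root of the
  smallest eigenvalue of H H^T (the singular values of H are the square roots of the
  m eigenvalues of the symmetric positive semidefinite matrix H H^T).\<close>
definition smallest_singular_value :: "real^'n^'m \<Rightarrow> real" where
  "smallest_singular_value H =
     sqrt (Min {lam. \<exists>v. v \<noteq> 0 \<and> (H ** transpose H) *v v = lam *\<^sub>R v})"

definition spectral_norm :: "real^'n^'m \<Rightarrow> real" where
  "spectral_norm M = onorm (\<lambda>v. M *v v)"

end

theory Submission
  imports Defs
begin

lemma inner_mat_transpose:
  fixes H :: "real^'n^'m"
  shows "(u::real^'m) \<bullet> (H *v w) = (transpose H *v u) \<bullet> w"
  by (simp add: dot_lmul_matrix)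

lemma min_eig:
  fixes B :: "real^'m^'m"
  assumes sym: "\<And>a b. a \<bullet> (B *v b) = (B *v a) \<bullet> b"
  shows "\<exists>l v. norm v = 1 \<and> B *v v = l *\<^sub>R v \<and> (\<forall>u. l * (norm u)^2 \<le> u \<bullet> (B *v u))"
proof -
  define f where "f v = v \<bullet> (B *v v)" for v
  have cont: "continuous_on (sphere 0 1) f"
    unfolding f_def by (intro continuous_intros)
  obtain i :: 'm where True by simp
  have ne: "sphere (0::real^'m) 1 \<noteq> {}"
    using norm_axis_1[of i] by (metis mem_sphere_0 empty_iff)
  obtain v0 where v0: "v0 \<in> sphere 0 1" and min: "\<And>w. w \<in> sphere 0 1 \<Longrightarrow> f v0 \<le> f w"
    using continuous_attains_inf[OF compact_sphere ne cont] by blast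
  define l where "l = f v0"
  have nv0: "norm v0 = 1" using v0 by simp
  have bound: "l * (norm u)^2 \<le> u \<bullet> (B *v u)" for u
  proof (cases "u = 0")
    case True then show ?thesis by simp
  next
    case False
    then have nu: "norm u > 0" by simp
    have "(u /\<^sub>R norm u) \<in> sphere 0 1" using False by simp
    then have "l \<le> f (u /\<^sub>R norm u)" using min l_def by blast
    also have "f (u /\<^sub>R norm u) = (u \<bullet> (B *v u)) / (norm u)^2"
      unfolding f_def by (simp add: matrix_vector_mult_scaleR power2_eq_square divide_inverse inverse_mult_distrib mult.commute mult.left_commute)
    finally show ?thesis using nu by (simp add: field_simps)
  qed
  define w where "w = B *v v0 - l *\<^sub>R v0"
  define Q where "Q x = x \<bullet> (B *v x) - l * (x \<bullet> x)" for x
  have Qge: "Q x \<ge> 0" for x using bound[of x] unfolding Q_def by (simp add: power2_norm_eq_inner)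
  have Qv0: "Q v0 = 0" unfolding Q_def l_def f_def using nv0 by (simp add: power2_norm_eq_inner[symmetric])
  have expand: "Q (v0 + t *\<^sub>R d) = Q v0 + 2 * t * (d \<bullet> w) + t^2 * Q d" for t d
  proof -
    have s: "v0 \<bullet> (B *v d) = d \<bullet> (B *v v0)" using sym[of v0 d] by (simp add: inner_commute)
    show ?thesis unfolding Q_def w_def
      by (simp add: matrix_vector_right_distrib matrix_vector_mult_scaleR inner_add_left inner_add_right
          inner_diff_right s algebra_simps power2_eq_square inner_commute[of v0 d])
  qed
  define a where "a = w \<bullet> w"
  define q where "q = Q w"
  have a0: "a \<ge> 0" unfolding a_def by simp
  have q0: "q \<ge> 0" unfolding q_def by (rule Qge)
  have "a \<le> 0"
  proof (rule ccontr)
    assume "\<not> a \<le> 0"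
    then have ap: "a > 0" by simp
    define t where "t = a / (q + 1)"
    have tp: "t > 0" using ap q0 unfolding t_def by simp
    have "0 \<le> Q (v0 + (-t) *\<^sub>R w)" by (rule Qge)
    also have "\<dots> = - 2 * t * a + t^2 * q"
      using expand[of "-t" w] Qv0 unfolding a_def q_def by simp
    finally have "2 * t * a \<le> t * t * q" by (simp add: power2_eq_square)
    then have "2 * a \<le> t * q" using tp by (simp add: mult.assoc)
    then have "2 * a * (q+1) \<le> a * q" unfolding t_def using q0 by (simp add: field_simps)
    then have "a * (q + 2) \<le> 0" by (simp add: algebra_simps)
    moreover have "a * (q + 2) > 0" using ap q0 by simp
    ultimately show False by linarith
  qed
  then have "w = 0" using a0 unfolding a_def by simp
  then have "B *v v0 = l *\<^sub>R v0" unfolding w_def by simp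
  then show ?thesis using nv0 bound by blast
qed

lemma eig_finite:
  fixes B :: "real^'m^'m"
  assumes sym: "\<And>a b. a \<bullet> (B *v b) = (B *v a) \<bullet> b"
  shows "finite {lam. \<exists>v. v \<noteq> 0 \<and> B *v v = lam *\<^sub>R v}" (is "finite ?S")
proof (rule ccontr)
  assume "infinite ?S"
  then obtain F where F: "finite F" "card F = CARD('m) + 1" "F \<subseteq> ?S"
    using infinite_arbitrarily_large by blast
  define e where "e lam = (SOME v. v \<noteq> 0 \<and> B *v v = lam *\<^sub>R v)" for lam
  have e: "e lam \<noteq> 0 \<and> B *v e lam = lam *\<^sub>R e lam" if "lam \<in> F" for lam
  proof -
    have "\<exists>v. v \<noteq> 0 \<and> B *v v = lam *\<^sub>R v" using F(3) that by blast
    then show ?thesis unfolding e_def by (rule someI_ex)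
  qed
  have orth: "e l1 \<bullet> e l2 = 0" if "l1 \<in> F" "l2 \<in> F" "l1 \<noteq> l2" for l1 l2
  proof -
    have "l2 * (e l1 \<bullet> e l2) = e l1 \<bullet> (B *v e l2)" using e[OF that(2)] by simp
    also have "\<dots> = (B *v e l1) \<bullet> e l2" by (rule sym)
    also have "\<dots> = l1 * (e l1 \<bullet> e l2)" using e[OF that(1)] by simp
    finally show ?thesis using that(3) by simp
  qed
  have inj: "inj_on e F"
  proof (rule inj_onI)
    fix l1 l2 assume h: "l1 \<in> F" "l2 \<in> F" "e l1 = e l2"
    show "l1 = l2"
    proof (rule ccontr)
      assume "l1 \<noteq> l2"
      then have "e l1 \<bullet> e l2 = 0" using orth h by blast
      then have "e l1 = 0" using h(3) by simp
      then show False using e h(1) by blast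
    qed
  qed
  have "pairwise orthogonal (e ` F)"
    unfolding pairwise_def orthogonal_def using orth by auto
  moreover have "0 \<notin> e ` F" using e by auto
  ultimately have "independent (e ` F)" by (rule pairwise_orthogonal_independent)
  then have "card (e ` F) \<le> DIM(real^'m)" using independent_bound by blast
  then have "card F \<le> CARD('m)" using card_image[OF inj] by simp
  then show False using F(2) by simp
qed


lemma spec_bound:
  fixes M :: "real^'n^'m"
  shows "norm (M *v v) \<le> spectral_norm M * norm v"
  unfolding spectral_norm_def by (rule onorm) simp

theorem theorem5:
  fixes A :: "'m::finite \<Rightarrow> real^'n::finite^'n"
    and b :: "'m \<Rightarrow> real^'n"
    and g :: "real^'n \<Rightarrow> real^'m"
    and g' :: "real^'n \<Rightarrow> real^'n^'m"
    and H :: "real^'n^'m"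
    and L \<mu>0 :: real
    and y :: "real^'m"
  assumes mn: "CARD('m) \<le> CARD('n)"
    and symm: "\<And>i. transpose (A i) = A i"
    and g_def: "\<And>x. g x = (\<chi> i. (1/2) * ((A i *v x) \<bullet> x) + b i \<bullet> x)"
    and g'_def: "\<And>x. g' x = (\<chi> i. A i *v x + b i)"
    and H_def: "H = (\<chi> i. b i)"
    and rankH: "rank H = CARD('m)"
    and mu0: "\<mu>0 = smallest_singular_value H"
    and Lpos: "L > 0"
    and Lip: "\<And>x x'. spectral_norm (g' x - g' x') \<le> L * norm (x - x')"
    and y_small: "norm y < \<mu>0^2 / (4 * L)"
  shows "\<exists>x. g x = y \<and> norm x \<le> \<mu>0 / (2 * L)"
proof -
  define B where "B = H ** transpose H"
  have Bq: "u \<bullet> (B *v v) = (transpose H *v u) \<bullet> (transpose H *v v)" for u v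
  proof -
    have "B *v v = H *v (transpose H *v v)" unfolding B_def by (simp only: matrix_vector_mul_assoc)
    then show ?thesis by (simp only: inner_mat_transpose)
  qed
  have sym: "a \<bullet> (B *v c) = (B *v a) \<bullet> c" for a c
  proof -
    have "a \<bullet> (B *v c) = (transpose H *v c) \<bullet> (transpose H *v a)" by (simp only: Bq inner_commute)
    also have "\<dots> = c \<bullet> (B *v a)" by (simp only: Bq)
    also have "\<dots> = (B *v a) \<bullet> c" by (rule inner_commute)
    finally show ?thesis .
  qed
  obtain l v0 where v0: "norm v0 = 1" "B *v v0 = l *\<^sub>R v0"
    and lb: "\<And>u. l * (norm u)^2 \<le> u \<bullet> (B *v u)"
    using min_eig[OF sym] by blast
  have surjH: "surj ((*v) H)" using rankH full_rank_surjective by blast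
  have injHt: "inj ((*v) (transpose H))"
    using rankH rank_transpose[of H] full_rank_injective[of "transpose H"] by simp
  have lpos: "l > 0"
  proof -
    have "l = v0 \<bullet> (B *v v0)" using v0 by (simp add: power2_norm_eq_inner[symmetric])
    also have "\<dots> = (norm (transpose H *v v0))^2" using Bq by (simp add: power2_norm_eq_inner)
    finally have e: "l = (norm (transpose H *v v0))^2" .
    have "v0 \<noteq> 0" using v0 by auto
    then have "transpose H *v v0 \<noteq> 0" using injHt
      by (metis injD matrix_vector_mult_0_right)
    then show ?thesis using e by simp
  qed
  define S where "S = {lam. \<exists>v. v \<noteq> 0 \<and> B *v v = lam *\<^sub>R v}"
  have finS: "finite S" unfolding S_def by (rule eig_finite[OF sym])
  have lS: "l \<in> S" 
  proof -
    have "v0 \<noteq> 0" using v0(1) by auto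
    then show ?thesis unfolding S_def using v0(2) by (intro CollectI exI[of _ v0] conjI)
  qed
  have lmin: "l \<le> lam" if "lam \<in> S" for lam
  proof -
    have "\<exists>v. v \<noteq> 0 \<and> B *v v = lam *\<^sub>R v" using that by (simp add: S_def)
    then obtain v where v: "v \<noteq> 0" "B *v v = lam *\<^sub>R v" by blast
    have "l * (norm v)^2 \<le> lam * (norm v)^2"
      using lb[of v] v(2) by (simp add: power2_norm_eq_inner)
    then show ?thesis using v(1) by simp
  qed
  have MinS: "Min S = l" using finS lS lmin by (meson Min_eqI)
  have mu: "\<mu>0 = sqrt l" using mu0 MinS unfolding smallest_singular_value_def S_def B_def by simp
  have mupos: "\<mu>0 > 0" using mu lpos by simp
  have mu2: "\<mu>0^2 = l" using mu lpos by simp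
  have injB: "inj ((*v) B)"
  proof (rule injI)
    fix u w assume "B *v u = B *v w"
    then have "B *v (u - w) = 0" by (simp add: matrix_vector_mult_diff_distrib)
    then have "l * (norm (u - w))^2 \<le> 0" using lb[of "u - w"] by simp
    then show "u = w" using lpos by (simp add: mult_le_0_iff)
  qed
  then have "rank B = CARD('m)" using full_rank_injective by blast
  then have "surj ((*v) B)" using full_rank_surjective by blast
  then have "bij ((*v) B)" using injB by (simp add: bij_def)
  then have "invertible B" using invertible_eq_bij by blast
  then obtain M where BM: "B ** M = mat 1" using invertible_right_inverse by blast
  define P where "P = transpose H ** M"
  have HP: "H ** P = mat 1" unfolding P_def using BM unfolding B_def by (simp add: matrix_mul_assoc)
  have Pbound: "norm (P *v z) \<le> norm z / \<mu>0" for z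
  proof -
    define u where "u = M *v z"
    have Bu: "B *v u = z" unfolding u_def using BM by (simp add: matrix_vector_mul_assoc)
    have Pz: "P *v z = transpose H *v u" unfolding P_def u_def by (simp add: matrix_vector_mul_assoc)
    have n2: "(norm (P *v z))^2 = u \<bullet> z" using Pz Bq[of u u] Bu by (simp add: power2_norm_eq_inner)
    have uz: "u \<bullet> z \<le> norm u * norm z" by (rule Cauchy_Schwarz_ineq2[THEN order_trans[OF abs_ge_self]])
    have "l * (norm u)^2 \<le> norm u * norm z" using lb[of u] Bu uz by simp
    then have lu: "l * norm u \<le> norm z"
      by (cases "norm u = 0") (auto simp: power2_eq_square)
    have "(norm (P *v z))^2 \<le> norm u * norm z" using n2 uz by simp
    also have "\<dots> \<le> (norm z / l) * norm z"
    proof (rule mult_right_mono)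
      show "norm u \<le> norm z / l" using lu lpos by (simp add: pos_le_divide_eq mult.commute)
    qed simp
    also have "\<dots> = (norm z / \<mu>0)^2" using mu2 by (simp add: power2_eq_square)
    finally show ?thesis using mupos by (meson divide_nonneg_pos norm_ge_zero power2_le_imp_le)
  qed
  have gdiff: "g x - g x' = g' ((1/2) *\<^sub>R (x + x')) *v (x - x')" for x x'
  proof -
    have sA: "(A i *v p) \<bullet> q = (A i *v q) \<bullet> p" for i p q
    proof -
      have "(A i *v p) \<bullet> q = (transpose (A i) *v p) \<bullet> q" using symm[of i] by simp
      also have "\<dots> = p \<bullet> (A i *v q)" by (simp add: dot_lmul_matrix)
      also have "\<dots> = (A i *v q) \<bullet> p" by (rule inner_commute)
      finally show ?thesis .
    qed
    show ?thesis
    proof (rule vec_eq_iff[THEN iffD2], rule allI)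
      fix i
      have h: "(A i *v (x + x')) \<bullet> (x - x') = (A i *v x) \<bullet> x - (A i *v x') \<bullet> x'"
        using sA[of i x x'] by (simp add: matrix_vector_right_distrib inner_add_left inner_diff_right)
      have r: "(g' ((1/2) *\<^sub>R (x + x')) *v (x - x')) $ i
          = (1/2) * ((A i *v (x + x')) \<bullet> (x - x')) + b i \<bullet> (x - x')"
        unfolding g'_def by (simp add: matrix_vector_mul_component matrix_vector_mult_scaleR inner_add_left)
      have l: "(g x - g x') $ i = ((1/2) * ((A i *v x) \<bullet> x) + b i \<bullet> x) - ((1/2) * ((A i *v x') \<bullet> x') + b i \<bullet> x')"
        unfolding g_def by simp
      show "(g x - g x') $ i = (g' ((1/2) *\<^sub>R (x + x')) *v (x - x')) $ i"
        using l r h inner_diff_right[of "b i" x x'] by linarith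
    qed
  qed
  have g'0: "g' 0 = H" unfolding g'_def H_def by simp
  have g0: "g 0 = 0" unfolding g_def by (simp add: vec_eq_iff)
  define r where "r = \<mu>0 / (2 * L)"
  have rpos: "r > 0" unfolding r_def using mupos Lpos by simp
  define T where "T x = P *v (H *v x - g x + y)" for x
  have Tdiff: "norm (T x - T x') \<le> (1/2) * norm (x - x')"
    if "norm x \<le> r" "norm x' \<le> r" for x x'
  proof -
    define m where "m = (1/2) *\<^sub>R (x + x')"
    have nm: "norm m \<le> r" unfolding m_def using that norm_triangle_ineq[of x x'] by simp
    have e1: "(H *v x - g x + y) - (H *v x' - g x' + y) = H *v (x - x') - (g x - g x')"
      by (simp add: matrix_vector_mult_diff_distrib)
    have e2: "H *v (x - x') - (g x - g x') = (g' 0 - g' m) *v (x - x')"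
      by (simp add: gdiff m_def g'0 matrix_vector_mult_diff_rdistrib)
    have "T x - T x' = P *v ((H *v x - g x + y) - (H *v x' - g x' + y))"
      unfolding T_def by (simp only: matrix_vector_mult_diff_distrib)
    also have "\<dots> = P *v ((g' 0 - g' m) *v (x - x'))" using e1 e2 by simp
    finally have "T x - T x' = P *v ((g' 0 - g' m) *v (x - x'))" .
    then have "norm (T x - T x') \<le> norm ((g' 0 - g' m) *v (x - x')) / \<mu>0" using Pbound by simp
    also have "\<dots> \<le> (L * norm m * norm (x - x')) / \<mu>0"
    proof -
      have "norm ((g' 0 - g' m) *v (x - x')) \<le> spectral_norm (g' 0 - g' m) * norm (x - x')"
        by (rule spec_bound)
      also have "\<dots> \<le> (L * norm m) * norm (x - x')"
        using Lip[of 0 m] by (intro mult_right_mono) auto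
      finally show ?thesis using mupos by (simp add: divide_right_mono)
    qed
    also have "\<dots> \<le> (L * r * norm (x - x')) / \<mu>0"
      using nm Lpos mupos by (intro divide_right_mono mult_right_mono) auto
    also have "\<dots> = (1/2) * norm (x - x')" unfolding r_def using mupos Lpos by (simp add: field_simps)
    finally show ?thesis .
  qed
  have T0: "norm (T 0) < r / 2"
  proof -
    have "norm (T 0) \<le> norm y / \<mu>0" unfolding T_def using g0 Pbound by simp
    also have "\<dots> < (\<mu>0^2 / (4 * L)) / \<mu>0" by (rule divide_strict_right_mono[OF y_small mupos])
    also have "\<dots> = r / 2" unfolding r_def using mupos by (simp add: power2_eq_square field_simps)
    finally show ?thesis .
  qed
  have maps: "T ` cball 0 r \<subseteq> cball 0 r"
  proof
    fix z assume "z \<in> T ` cball 0 r"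
    then obtain x where x: "norm x \<le> r" "z = T x" by auto
    have "norm (T x) \<le> norm (T x - T 0) + norm (T 0)" using norm_triangle_ineq[of "T x - T 0" "T 0"] by simp
    also have "\<dots> \<le> (1/2) * norm x + norm (T 0)" using Tdiff[of x 0] x rpos by simp
    also have "\<dots> \<le> r" using T0 x by simp
    finally show "z \<in> cball 0 r" using x by simp
  qed
  have "\<exists>!x\<in>cball 0 r. T x = x"
  proof (rule Banach_fix[where c="1/2"])
    show "complete (cball (0::real^'n) r)" by (simp add: complete_eq_closed)
    show "cball (0::real^'n) r \<noteq> {}" using rpos by simp
    show "T ` cball 0 r \<subseteq> cball 0 r" by (rule maps)
    fix x x' :: "real^'n" assume "x \<in> cball 0 r" "x' \<in> cball 0 r"
    then show "dist (T x) (T x') \<le> 1 / 2 * dist x x'"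
      using Tdiff[of x x'] by (simp add: dist_norm)
  qed simp_all
  then obtain x where x: "norm x \<le> r" "T x = x" by auto
  have "H *v x = (H ** P) *v (H *v x - g x + y)" using x(2) unfolding T_def
    by (simp add: matrix_vector_mul_assoc[symmetric])
  then have "g x = y" using HP by simp
  then show ?thesis using x r_def by blast
qed

end
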